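(* As formal power series in $y$, \[ \sum_{n\ge0}D_n(x)y^n=\frac{(1-xy+y)(1+x^2y^2)}{(1-xy)(1-xy^2)-xy^3}+(2x-1)y . \]
   Context: For $n\ge1$ let $\Xi_n$ be the poset on $\{x_1,\dots,x_n\}$ whose cover relations are exactly: $x_2\prec x_1$, $x_3\prec x_2$, and for $3\le i\le n-1$, $x_i\prec x_{i+1}$ if $i$ is odd and $x_{i+1}\prec x_i$ if $i$ is even (so $x_1>x_2>x_3<x_4>x_5<\cdots$). A filter of a poset is an up-closed subset. The matchable Lucas cube $\Omega_n$ is the graph whose vertices are the filters of $\Xi_n$, two filters adjacent iff one is obtained from the other by deleting a single element; $\Omega_0$ is the one-vertex graph. $d_{n,k}$ is the number of vertices of degree $k$ in $\Omega_n$ and $D_n(x)=\sum_{k\ge0}d_{n,k}x^k$ is the degree sequence polynomial. *)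

theory Defs
  imports "HOL-Computational_Algebra.Computational_Algebra"
begin

text \<open>Elements of the poset Xi_n are the indices 1..n (index i stands for x_i).
  xi_cover n a b means x_a is covered by x_b, i.e. x_a \<prec> x_b.\<close>
definition xi_cover :: "nat \<Rightarrow> nat \<Rightarrow> nat \<Rightarrow> bool" where
  "xi_cover n a b \<longleftrightarrow> a \<in> {1..n} \<and> b \<in> {1..n} \<and>
     ((a = 2 \<and> b = 1) \<or> (a = 3 \<and> b = 2) \<or>
      (\<exists>i. 3 \<le> i \<and> i \<le> n - 1 \<and>
         ((odd i \<and> a = i \<and> b = i + 1) \<or> (even i \<and> a = i + 1 \<and> b = i))))"

definition xi_le :: "nat \<Rightarrow> nat \<Rightarrow> nat \<Rightarrow> bool" where
  "xi_le n = (xi_cover n)\<^sup>*\<^sup>*"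

definition xi_filters :: "nat \<Rightarrow> nat set set" where
  "xi_filters n = {F. F \<subseteq> {1..n} \<and> (\<forall>a\<in>F. \<forall>b\<in>{1..n}. xi_le n a b \<longrightarrow> b \<in> F)}"

definition omega_adj :: "nat set \<Rightarrow> nat set \<Rightarrow> bool" where
  "omega_adj F G \<longleftrightarrow> (\<exists>a\<in>F. G = F - {a}) \<or> (\<exists>a\<in>G. F = G - {a})"

definition omega_deg :: "nat \<Rightarrow> nat set \<Rightarrow> nat" where
  "omega_deg n F = card {G \<in> xi_filters n. omega_adj F G}"

definition d_count :: "nat \<Rightarrow> nat \<Rightarrow> nat" where
  "d_count n k = card {F \<in> xi_filters n. omega_deg n F = k}"

text \<open>Degree sequence polynomial D_n(x) = sum_k d_{n,k} x^k (the sum is finite: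
  degrees are bounded by the number of vertices).\<close>
definition D_poly :: "nat \<Rightarrow> real poly" where
  "D_poly n = (\<Sum>k\<le>card (xi_filters n). monom (of_nat (d_count n k)) k)"

end

theory Submission
  imports Defs
begin


definition R :: "nat \<Rightarrow> nat \<Rightarrow> bool" where
  "R a b \<longleftrightarrow> (a = 2 \<and> b = 1) \<or> (a = 3 \<and> b = 2) \<or> (3 \<le> a \<and> odd a \<and> b = Suc a)
     \<or> (4 \<le> b \<and> even b \<and> a = Suc b)"

lemma R_irrefl: "\<not> R a a" by (auto simp: R_def)
lemma R_pos: "R a b \<Longrightarrow> 1 \<le> a \<and> 1 \<le> b" by (auto simp: R_def)

lemma cover_iff: "xi_cover n a b \<longleftrightarrow> a \<le> n \<and> b \<le> n \<and> R a b"
proof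
  assume "xi_cover n a b" then show "a \<le> n \<and> b \<le> n \<and> R a b"
    unfolding xi_cover_def R_def by auto
next
  assume h: "a \<le> n \<and> b \<le> n \<and> R a b"
  then consider "a = 2 \<and> b = 1" | "a = 3 \<and> b = 2" | "3 \<le> a \<and> odd a \<and> b = Suc a"
     | "4 \<le> b \<and> even b \<and> a = Suc b" unfolding R_def by blast
  then show "xi_cover n a b"
  proof cases
    case 3 then show ?thesis using h unfolding xi_cover_def
      by (intro conjI disjI2) (auto intro!: exI[of _ a])
  next
    case 4 then show ?thesis using h unfolding xi_cover_def
      by (intro conjI disjI2) (auto intro!: exI[of _ b])
  qed (use h in \<open>auto simp: xi_cover_def\<close>)
qed

definition filt :: "nat \<Rightarrow> nat set set" where
  "filt n = {F. F \<subseteq> {1..n} \<and> (\<forall>a\<in>F. \<forall>b. b \<le> n \<and> R a b \<longrightarrow> b \<in> F)}"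

lemma filters_eq: "xi_filters n = filt n"
proof (intro set_eqI iffI)
  fix F assume "F \<in> xi_filters n"
  then show "F \<in> filt n" unfolding xi_filters_def filt_def xi_le_def
    using R_pos cover_iff by (auto, meson atLeastAtMost_iff r_into_rtranclp subsetD)
next
  fix F assume F: "F \<in> filt n"
  have "xi_le n a b \<Longrightarrow> a \<in> F \<Longrightarrow> b \<in> F" for a b
    unfolding xi_le_def
  proof (induction rule: rtranclp_induct)
    case (step y z) then show ?case using F by (auto simp: filt_def cover_iff)
  qed simp
  then show "F \<in> xi_filters n" using F unfolding xi_filters_def filt_def by auto
qed

lemma finite_filt: "finite (filt n)"
  by (rule finite_subset[of _ "Pow {1..n}"]) (auto simp: filt_def)

lemma filt_sub: "F \<in> filt n \<Longrightarrow> F \<subseteq> {1..n}" by (auto simp: filt_def)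

definition t :: "nat \<Rightarrow> nat set \<Rightarrow> nat \<Rightarrow> nat" where
  "t n F a = (if a \<in> F then (if \<exists>c\<in>F. R c a then 0 else 1)
              else (if \<forall>d. d \<le> n \<and> R a d \<longrightarrow> d \<in> F then 1 else 0))"

lemma down_iff:
  assumes F: "F \<in> filt n" and a: "a \<in> F"
  shows "F - {a} \<in> filt n \<longleftrightarrow> \<not> (\<exists>c\<in>F. R c a)"
proof
  assume h: "F - {a} \<in> filt n"
  show "\<not> (\<exists>c\<in>F. R c a)"
  proof
    assume "\<exists>c\<in>F. R c a"
    then obtain c where c: "c \<in> F" "R c a" by blast
    have "c \<noteq> a" using c R_irrefl by blast
    moreover have "a \<le> n" using F a by (auto simp: filt_def)
    ultimately show False using h c unfolding filt_def by blast
  qed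
next
  assume h: "\<not> (\<exists>c\<in>F. R c a)"
  show "F - {a} \<in> filt n" using F h unfolding filt_def by blast
qed

lemma up_iff:
  assumes F: "F \<in> filt n" and a: "a \<notin> F" "a \<in> {1..n}"
  shows "insert a F \<in> filt n \<longleftrightarrow> (\<forall>d. d \<le> n \<and> R a d \<longrightarrow> d \<in> F)"
  using F a R_irrefl unfolding filt_def by auto

lemma deg_eq:
  assumes F: "F \<in> filt n"
  shows "omega_deg n F = (\<Sum>a\<in>{1..n}. t n F a)"
proof -
  define Dn where "Dn = {a\<in>F. F - {a} \<in> filt n}"
  define Up where "Up = {a\<in>{1..n}-F. insert a F \<in> filt n}"
  have FS: "F \<subseteq> {1..n}" using filt_sub[OF F] .
  have adj: "{G \<in> xi_filters n. omega_adj F G} = (\<lambda>a. F - {a}) ` Dn \<union> (\<lambda>a. insert a F) ` Up"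
    unfolding filters_eq Dn_def Up_def omega_adj_def
  proof (intro set_eqI iffI)
    fix G assume "G \<in> {G \<in> filt n. (\<exists>a\<in>F. G = F - {a}) \<or> (\<exists>a\<in>G. F = G - {a})}"
    then have G: "G \<in> filt n" and "(\<exists>a\<in>F. G = F - {a}) \<or> (\<exists>a\<in>G. F = G - {a})" by auto
    then consider a where "a \<in> F" "G = F - {a}" | a where "a \<in> G" "F = G - {a}" by blast
    then show "G \<in> (\<lambda>a. F - {a}) ` {a \<in> F. F - {a} \<in> filt n} \<union>
              (\<lambda>a. insert a F) ` {a \<in> {1..n} - F. insert a F \<in> filt n}"
    proof cases
      case 1 then show ?thesis using G by auto
    next
      case 2
      then have "G = insert a F" by auto
      moreover have "a \<in> {1..n}" using filt_sub[OF G] 2 by auto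
      ultimately show ?thesis using G 2 by auto
    qed
  qed auto
  have disj: "(\<lambda>a. F - {a}) ` Dn \<inter> (\<lambda>a. insert a F) ` Up = {}"
    unfolding Dn_def Up_def by auto
  have inj1: "inj_on (\<lambda>a. F - {a}) Dn" unfolding Dn_def inj_on_def by auto
  have inj2: "inj_on (\<lambda>a. insert a F) Up" unfolding Up_def inj_on_def by auto
  have fin: "finite Dn" "finite Up" unfolding Dn_def Up_def using finite_subset[OF FS] by auto
  have c1: "omega_deg n F = card Dn + card Up"
    unfolding omega_deg_def adj
    by (subst card_Un_disjoint) (use disj fin inj1 inj2 in \<open>auto simp: card_image\<close>)
  have "(\<Sum>a\<in>{1..n}. t n F a) = (\<Sum>a\<in>{1..n}. (if a \<in> Dn then 1 else 0) + (if a \<in> Up then 1 else 0))"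
  proof (rule sum.cong[OF refl])
    fix a assume a: "a \<in> {1..n}"
    show "t n F a = (if a \<in> Dn then 1 else 0) + (if a \<in> Up then 1 else 0)"
    proof (cases "a \<in> F")
      case True then show ?thesis using down_iff[OF F True] unfolding t_def Dn_def Up_def by auto
    next
      case False then show ?thesis using up_iff[OF F False a] a unfolding t_def Dn_def Up_def by auto
    qed
  qed
  also have "\<dots> = card {a\<in>{1..n}. a \<in> Dn} + card {a\<in>{1..n}. a \<in> Up}"
    by (simp add: sum.distrib flip: sum.inter_filter)
  also have "{a\<in>{1..n}. a \<in> Dn} = Dn" using FS unfolding Dn_def by auto
  also have "{a\<in>{1..n}. a \<in> Up} = Up" unfolding Up_def by auto
  finally show ?thesis using c1 by simp
qed



lemma poly_D: "poly (D_poly n) x = (\<Sum>F\<in>filt n. x ^ (\<Sum>a\<in>{1..n}. t n F a))"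
proof -
  let ?N = "card (filt n)"
  have le: "omega_deg n F \<le> ?N" for F
    unfolding omega_deg_def filters_eq by (rule card_mono[OF finite_filt]) auto
  have "poly (D_poly n) x = (\<Sum>k\<le>?N. of_nat (d_count n k) * x ^ k)"
    by (simp add: D_poly_def poly_sum poly_monom filters_eq)
  also have "\<dots> = (\<Sum>k\<le>?N. \<Sum>F\<in>{F\<in>filt n. omega_deg n F = k}. x ^ omega_deg n F)"
    by (simp add: d_count_def filters_eq)
  also have "\<dots> = (\<Sum>F\<in>filt n. x ^ omega_deg n F)"
    by (rule sum.group[OF finite_filt]) (use le in auto)
  also have "\<dots> = (\<Sum>F\<in>filt n. x ^ (\<Sum>a\<in>{1..n}. t n F a))"
    by (rule sum.cong[OF refl]) (simp add: deg_eq)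
  finally show ?thesis .
qed



lemma R_lower: "3 \<le> a \<Longrightarrow> R c a \<longleftrightarrow> (even a \<and> (c = a - 1 \<or> c = Suc a))"
  unfolding R_def apply (cases a) apply auto apply presburger+ done

lemma R_upper: "3 \<le> a \<Longrightarrow> R a d \<longleftrightarrow> (odd a \<and> (d = a - 1 \<or> d = Suc a))"
  unfolding R_def apply auto apply presburger+ done

lemma R_1: "R c (Suc 0) \<longleftrightarrow> c = 2" "\<not> R (Suc 0) d" "R c 1 \<longleftrightarrow> c = 2" "\<not> R 1 d" "R c 2 \<longleftrightarrow> c = 3" "R 2 d \<longleftrightarrow> d = 1" "R 2 d \<longleftrightarrow> d = Suc 0"
  unfolding R_def by auto

definition tt :: "bool \<Rightarrow> bool \<Rightarrow> bool \<Rightarrow> bool \<Rightarrow> nat" where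
  "tt p u v w = (if p then (if v then 1 else if u \<and> w then 1 else 0)
                 else (if v then (if \<not> u \<and> \<not> w then 1 else 0) else 1))"

definition okb :: "bool \<Rightarrow> bool \<Rightarrow> bool \<Rightarrow> bool" where
  "okb p v w = (if p then (v \<longrightarrow> w) else (w \<longrightarrow> v))"

lemma t_mid:
  assumes "F \<subseteq> {1..m}" "3 \<le> a" "a < m"
  shows "t m F a = tt (odd a) (a - 1 \<in> F) (a \<in> F) (Suc a \<in> F)"
proof -
  have lo: "(\<exists>c\<in>F. R c a) \<longleftrightarrow> (even a \<and> (a - 1 \<in> F \<or> Suc a \<in> F))"
    by (auto simp: R_lower[OF assms(2)])
  have up: "(\<forall>d. d \<le> m \<and> R a d \<longrightarrow> d \<in> F) \<longleftrightarrow> (odd a \<longrightarrow> a - 1 \<in> F \<and> Suc a \<in> F)"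
    using R_upper[OF assms(2)] assms(3) by auto
  show ?thesis unfolding t_def tt_def lo up by simp
qed

lemma t_last:
  assumes "F \<subseteq> {1..m}" "3 \<le> m"
  shows "t m F m = tt (odd m) (m - 1 \<in> F) (m \<in> F) (odd m)"
proof -
  have ns: "Suc m \<notin> F" using assms(1) by auto
  have lo: "(\<exists>c\<in>F. R c m) \<longleftrightarrow> (even m \<and> (m - 1 \<in> F))"
    using ns by (auto simp: R_lower[OF assms(2)])
  have up: "(\<forall>d. d \<le> m \<and> R m d \<longrightarrow> d \<in> F) \<longleftrightarrow> (odd m \<longrightarrow> m - 1 \<in> F)"
    using R_upper[OF assms(2)] by auto
  show ?thesis unfolding t_def tt_def lo up by simp
qed

lemma t_1: "t m F 1 = (if 1 \<in> F then (if 2 \<in> F then 0 else 1) else 1)"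
proof -
  have lo: "(\<exists>c\<in>F. R c 1) \<longleftrightarrow> 2 \<in> F" by (auto simp: R_1)
  have up: "(\<forall>d. d \<le> m \<and> R 1 d \<longrightarrow> d \<in> F)" using R_1(4) by blast
  show ?thesis unfolding t_def lo using up by simp
qed

lemma t_2: "2 \<le> m \<Longrightarrow> t m F 2 = (if 2 \<in> F then (if 3 \<in> F then 0 else 1) else (if 1 \<in> F then 1 else 0))"
proof -
  assume m: "2 \<le> m"
  have lo: "(\<exists>c\<in>F. R c 2) \<longleftrightarrow> 3 \<in> F" by (auto simp: R_1)
  have up: "(\<forall>d. d \<le> m \<and> R 2 d \<longrightarrow> d \<in> F) \<longleftrightarrow> 1 \<in> F" using R_1(7) m by auto
  show ?thesis unfolding t_def lo up by simp
qed

lemma filt_Suc: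
  assumes n: "3 \<le> n"
  shows "filt (Suc n) = {G\<in>filt n. okb (odd n) (n \<in> G) False} \<union>
     insert (Suc n) ` {G\<in>filt n. okb (odd n) (n \<in> G) True}"
proof (intro set_eqI iffI)
  fix F assume F: "F \<in> filt (Suc n)"
  show "F \<in> {G\<in>filt n. okb (odd n) (n \<in> G) False} \<union>
     insert (Suc n) ` {G\<in>filt n. okb (odd n) (n \<in> G) True}"
  proof (cases "Suc n \<in> F")
    case False
    have "F \<in> filt n" using F False unfolding filt_def by (auto simp: le_Suc_eq)
    moreover have "okb (odd n) (n \<in> F) False"
    proof -
      have "odd n \<Longrightarrow> n \<in> F \<Longrightarrow> False"
        using F False n unfolding filt_def R_def by auto
      then show ?thesis unfolding okb_def by auto
    qed
    ultimately show ?thesis by blast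
  next
    case True
    have "F - {Suc n} \<in> filt n" using F unfolding filt_def by (auto simp: le_Suc_eq)
    moreover have "okb (odd n) (n \<in> F - {Suc n}) True"
    proof -
      have "R (Suc n) n" if "even n" using that n unfolding R_def by presburger
      then have "even n \<Longrightarrow> n \<in> F"
        using F True n unfolding filt_def by auto
      then show ?thesis unfolding okb_def by auto
    qed
    moreover have "F = insert (Suc n) (F - {Suc n})" using True by auto
    ultimately show ?thesis by blast
  qed
next
  fix F assume "F \<in> {G\<in>filt n. okb (odd n) (n \<in> G) False} \<union>
     insert (Suc n) ` {G\<in>filt n. okb (odd n) (n \<in> G) True}"
  then consider "F \<in> filt n" "okb (odd n) (n \<in> F) False"
    | G where "G \<in> filt n" "okb (odd n) (n \<in> G) True" "F = insert (Suc n) G" by blast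
  then show "F \<in> filt (Suc n)"
  proof cases
    case 1
    have key: "R a (Suc n) \<Longrightarrow> a \<le> n \<Longrightarrow> a = n \<and> odd n" for a using n unfolding R_def by auto
    have FS: "F \<subseteq> {1..n}" using filt_sub[OF 1(1)] .
    show ?thesis unfolding filt_def
    proof (intro CollectI conjI ballI allI impI)
      show "F \<subseteq> {1..Suc n}" using FS by auto
    next
      fix a b assume a: "a \<in> F" and b: "b \<le> Suc n \<and> R a b"
      show "b \<in> F"
      proof (cases "b \<le> n")
        case True then show ?thesis using 1(1) a b unfolding filt_def by blast
      next
        case False
        then have "b = Suc n" using b by auto
        moreover have "a \<le> n" using FS a by auto
        ultimately have "a = n \<and> odd n" using key b by blast
        then show ?thesis using 1(2) a unfolding okb_def by auto
      qed
    qed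
  next
    case 2
    have "R (Suc n) b \<Longrightarrow> b \<le> Suc n \<Longrightarrow> b = n \<and> even n" for b using n unfolding R_def by auto
    then show ?thesis using 2 unfolding filt_def okb_def
      by (auto simp: le_Suc_eq split: if_splits)
  qed
qed

lemma sum_filt_Suc:
  assumes n: "3 \<le> n"
  shows "(\<Sum>F\<in>filt (Suc n). h F) =
    (\<Sum>G\<in>filt n. if okb (odd n) (n \<in> G) False then h G else 0) +
    (\<Sum>G\<in>filt n. if okb (odd n) (n \<in> G) True then h (insert (Suc n) G) else 0)"
proof -
  have notin: "Suc n \<notin> G" if "G \<in> filt n" for G using filt_sub[OF that] by auto
  have inj: "inj_on (insert (Suc n)) {G\<in>filt n. okb (odd n) (n \<in> G) True}"
    unfolding inj_on_def using notin by (metis (no_types, lifting) mem_Collect_eq insert_ident)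
  have disj: "{G\<in>filt n. okb (odd n) (n \<in> G) False} \<inter>
     insert (Suc n) ` {G\<in>filt n. okb (odd n) (n \<in> G) True} = {}"
    using notin by auto
  have fin: "finite {G\<in>filt n. P G}" for P using finite_filt by auto
  show ?thesis
    unfolding filt_Suc[OF n]
    by (subst sum.union_disjoint) (use fin disj inj in \<open>auto simp: sum.reindex sum.inter_filter finite_filt\<close>)
qed

definition E :: "nat \<Rightarrow> nat set \<Rightarrow> nat" where
  "E m F = (\<Sum>a\<in>{1..<m}. t m F a)"

lemma E_Suc:
  assumes n: "3 \<le> n" and F: "F \<in> filt (Suc n)"
  shows "E (Suc n) F = E n (F - {Suc n}) + t (Suc n) F n"
proof -
  have FS: "F \<subseteq> {1..Suc n}" using filt_sub[OF F] .
  have GS: "F - {Suc n} \<subseteq> {1..n}" using FS by auto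
  have "t (Suc n) F a = t n (F - {Suc n}) a" if a: "a \<in> {1..<n}" for a
  proof -
    consider "a = 1" | "a = 2" | "3 \<le> a" using a by force
    then show ?thesis
    proof cases
      case 1 then show ?thesis using n t_1[of "Suc n" F] t_1[of n "F - {Suc n}"] by simp
    next
      case 2 then show ?thesis using n t_2[of "Suc n" F] t_2[of n "F - {Suc n}"] by simp
    next
      case 3
      have "Suc a \<noteq> Suc n" "a - 1 \<noteq> Suc n" "a \<noteq> Suc n" using a by auto
      then show ?thesis using t_mid[OF FS 3] t_mid[OF GS 3] a by auto
    qed
  qed
  then have "(\<Sum>a\<in>{1..<n}. t (Suc n) F a) = E n (F - {Suc n})"
    unfolding E_def by (rule sum.cong[OF refl])
  moreover have "{1..<Suc n} = insert n {1..<n}" using n by auto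
  ultimately show ?thesis unfolding E_def by simp
qed

lemma total_E: "1 \<le> n \<Longrightarrow> (\<Sum>a\<in>{1..n}. t n F a) = E n F + t n F n"
proof -
  assume "1 \<le> n"
  then have "{1..n} = insert n {1..<n}" by auto
  then show ?thesis unfolding E_def by simp
qed



context fixes x :: real
begin

definition S :: "nat \<Rightarrow> bool \<Rightarrow> bool \<Rightarrow> real" where
  "S n u v = (\<Sum>F\<in>filt n. if (n - 1 \<in> F \<longleftrightarrow> u) \<and> (n \<in> F \<longleftrightarrow> v) then x ^ E n F else 0)"

lemma split4:
  "(\<Sum>F\<in>filt n. x ^ E n F * \<phi> (n - 1 \<in> F) (n \<in> F)) =
    S n True True * \<phi> True True + S n True False * \<phi> True False +
    S n False True * \<phi> False True + S n False False * \<phi> False False"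
  unfolding S_def sum_distrib_right sum.distrib[symmetric]
  by (rule sum.cong[OF refl]) auto

definition trn :: "bool \<Rightarrow> bool \<Rightarrow> bool \<Rightarrow> bool \<Rightarrow> bool \<Rightarrow> real" where
  "trn p v w u v' = (if okb p v' w \<and> (v' \<longleftrightarrow> v) then x ^ tt p u v' w else 0)"

lemma S_Suc:
  assumes n: "3 \<le> n"
  shows "S (Suc n) v w = (\<Sum>G\<in>filt n. x ^ E n G * trn (odd n) v w (n - 1 \<in> G) (n \<in> G))"
proof -
  define h where "h F = (if (n \<in> F \<longleftrightarrow> v) \<and> (Suc n \<in> F \<longleftrightarrow> w) then x ^ E (Suc n) F else 0)" for F
  have "S (Suc n) v w = (\<Sum>F\<in>filt (Suc n). h F)" unfolding S_def h_def by simp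
  also have "\<dots> = (\<Sum>G\<in>filt n. (if okb (odd n) (n \<in> G) False then h G else 0) +
      (if okb (odd n) (n \<in> G) True then h (insert (Suc n) G) else 0))"
    unfolding sum_filt_Suc[OF n] sum.distrib ..
  also have "\<dots> = (\<Sum>G\<in>filt n. x ^ E n G * trn (odd n) v w (n - 1 \<in> G) (n \<in> G))"
  proof (rule sum.cong[OF refl])
    fix G assume G: "G \<in> filt n"
    have GS: "G \<subseteq> {1..n}" using filt_sub[OF G] .
    have ns: "Suc n \<notin> G" using GS by auto
    have GS': "G \<subseteq> {1..Suc n}" using GS by auto
    have GS'': "insert (Suc n) G \<subseteq> {1..Suc n}" using GS by auto
    have n3: "3 \<le> n" "n < Suc n" using n by auto
    have m1: "n - 1 \<noteq> Suc n" "n \<noteq> Suc n" by auto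
    show "(if okb (odd n) (n \<in> G) False then h G else 0) +
      (if okb (odd n) (n \<in> G) True then h (insert (Suc n) G) else 0) =
      x ^ E n G * trn (odd n) v w (n - 1 \<in> G) (n \<in> G)"
    proof (cases w)
      case False
      show ?thesis
      proof (cases "okb (odd n) (n \<in> G) False")
        case True
        have Gf: "G \<in> filt (Suc n)" using filt_Suc[OF n] G True by auto
        have "E (Suc n) G = E n G + tt (odd n) (n - 1 \<in> G) (n \<in> G) False"
          using E_Suc[OF n Gf] ns t_mid[OF GS' n3] by simp
        then show ?thesis using False True ns unfolding h_def trn_def
          by (auto simp: power_add)
      next
        case nok: False
        then show ?thesis using False ns unfolding h_def trn_def by auto
      qed
    next
      case True
      show ?thesis
      proof (cases "okb (odd n) (n \<in> G) True")
        case ok: True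
        have Gf: "insert (Suc n) G \<in> filt (Suc n)" using filt_Suc[OF n] G ok by auto
        have "E (Suc n) (insert (Suc n) G) = E n G + tt (odd n) (n - 1 \<in> G) (n \<in> G) True"
          using E_Suc[OF n Gf] ns t_mid[OF GS'' n3] m1 by simp
        then show ?thesis using True ok ns unfolding h_def trn_def
          by (auto simp: power_add)
      next
        case nok: False
        then show ?thesis using True ns unfolding h_def trn_def by auto
      qed
    qed
  qed
  finally show ?thesis .
qed

lemma S_Suc_explicit:
  assumes n: "3 \<le> n"
  shows "S (Suc n) True True = (if odd n then x * S n True True + x * S n False True
                                else S n True True + S n False True)"
    "S (Suc n) True False = (if odd n then 0 else S n True True + x * S n False True)"
    "S (Suc n) False True = (if odd n then S n False False + x * S n True False else 0)"
    "S (Suc n) False False = (if odd n then S n False False + S n True False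
                                else x * S n True False + x * S n False False)"
proof -
  have e: "S (Suc n) v w = S n True True * trn (odd n) v w True True + S n True False * trn (odd n) v w True False +
    S n False True * trn (odd n) v w False True + S n False False * trn (odd n) v w False False" for v w
    unfolding S_Suc[OF n] by (rule split4)
  show "S (Suc n) True True = (if odd n then x * S n True True + x * S n False True
                                else S n True True + S n False True)"
    "S (Suc n) True False = (if odd n then 0 else S n True True + x * S n False True)"
    "S (Suc n) False True = (if odd n then S n False False + x * S n True False else 0)"
    "S (Suc n) False False = (if odd n then S n False False + S n True False
                                else x * S n True False + x * S n False False)"
    unfolding e trn_def okb_def tt_def by (auto simp: algebra_simps)
qed

lemma W_out:
  assumes n: "3 \<le> n"
  shows "poly (D_poly n) x = (if odd n then x * S n True True + x * S n False True + x * S n True False + S n False False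
     else S n True True + x * S n False True + x * S n True False + x * S n False False)"
proof -
  have "poly (D_poly n) x = (\<Sum>F\<in>filt n. x ^ E n F * x ^ tt (odd n) (n - 1 \<in> F) (n \<in> F) (odd n))"
    unfolding poly_D
  proof (rule sum.cong[OF refl])
    fix F assume F: "F \<in> filt n"
    show "x ^ (\<Sum>a\<in>{1..n}. t n F a) = x ^ E n F * x ^ tt (odd n) (n - 1 \<in> F) (n \<in> F) (odd n)"
      using total_E[of n F] n t_last[OF filt_sub[OF F] n] by (simp add: power_add)
  qed
  also have "\<dots> = S n True True * x ^ tt (odd n) True True (odd n) + S n True False * x ^ tt (odd n) True False (odd n) +
    S n False True * x ^ tt (odd n) False True (odd n) + S n False False * x ^ tt (odd n) False False (odd n)"
    by (rule split4)
  also have "\<dots> = (if odd n then x * S n True True + x * S n False True + x * S n True False + S n False False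
     else S n True True + x * S n False True + x * S n True False + x * S n False False)" unfolding tt_def by (auto simp: algebra_simps)
  finally show ?thesis .
qed

end



abbreviation W :: "real \<Rightarrow> nat \<Rightarrow> real" where "W x n \<equiv> poly (D_poly n) x"

lemma filt3: "filt 3 = {{}, {1}, {1,2}, {1,2,3}}"
proof (intro set_eqI iffI)
  fix F assume F: "F \<in> filt 3"
  have s: "F \<subseteq> {1,2,3}" using filt_sub[OF F] by auto
  have "R 3 2" "R 2 1" unfolding R_def by auto
  then have i: "3 \<in> F \<Longrightarrow> 2 \<in> F" "2 \<in> F \<Longrightarrow> 1 \<in> F" using F unfolding filt_def by auto
  show "F \<in> {{}, {1}, {1,2}, {1,2,3}}"
    using s i by (cases "1 \<in> F"; cases "2 \<in> F"; cases "3 \<in> F") auto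
next
  fix F assume "F \<in> {{}, {1::nat}, {1,2}, {1,2,3}}"
  then show "F \<in> filt 3" unfolding filt_def R_def by auto
qed

lemma filt2: "filt 2 = {{}, {1}, {1,2}}"
proof (intro set_eqI iffI)
  fix F assume F: "F \<in> filt 2"
  have s: "F \<subseteq> {1,2}" using filt_sub[OF F] by auto
  have "R 2 1" unfolding R_def by auto
  then have i: "2 \<in> F \<Longrightarrow> 1 \<in> F" using F unfolding filt_def by auto
  show "F \<in> {{}, {1}, {1,2}}"
    using s i by (cases "1 \<in> F"; cases "2 \<in> F") auto
next
  fix F assume "F \<in> {{}, {1::nat}, {1,2}}"
  then show "F \<in> filt 2" unfolding filt_def R_def by auto
qed

lemma filt1: "filt 1 = {{}, {1}}"
  unfolding filt_def using R_1 by (auto simp: subset_singleton_iff)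

lemma dist: "{1,2} \<noteq> {1,2,3::nat}" "{1} \<noteq> {1,2,3::nat}" "{1} \<noteq> {1,2::nat}"
  "{} \<noteq> {1,2,3::nat}" "{} \<noteq> {1,2::nat}" "{} \<noteq> {1::nat}" by auto

lemma filt0: "filt 0 = {{}}"
  unfolding filt_def by auto

lemma W0: "W x 0 = 1"
  unfolding poly_D filt0 by simp

lemma W1: "W x 1 = 2 * x"
  unfolding poly_D filt1 by (simp add: t_def R_def)

lemma W2: "W x 2 = 2 * x + x^2"
proof -
  have "{1..2::nat} = {1,2}" by auto
  then show ?thesis unfolding poly_D filt2 by (simp add: t_1[simplified] t_2[simplified] dist[simplified] power2_eq_square)
qed

lemma S3: "S x 3 True True = 1" "S x 3 True False = x" "S x 3 False True = 0" "S x 3 False False = x + x^2"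
proof -
  have "{1..<3::nat} = {1,2}" by auto
  then have E: "E 3 F = t 3 F 1 + t 3 F 2" for F unfolding E_def by simp
  show "S x 3 True True = 1" "S x 3 True False = x" "S x 3 False True = 0" "S x 3 False False = x + x^2"
    unfolding S_def filt3 E by (simp_all add: t_1[simplified] t_2[simplified] dist[simplified] power2_eq_square)
qed



lemma Szero: "3 \<le> n \<Longrightarrow> (odd n \<longrightarrow> S x n False True = 0) \<and> (even n \<longrightarrow> S x n True False = 0)"
proof (cases "n = 3")
  case True then show ?thesis by (simp add: S3)
next
  case False
  assume "3 \<le> n"
  then obtain m where m: "n = Suc m" "3 \<le> m" using False by (cases n) auto
  then show ?thesis using S_Suc_explicit[OF m(2), of x] by auto
qed

lemma Wrec:
  assumes n: "3 \<le> n"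
  shows "W x (Suc (Suc (Suc n))) = x * W x (Suc (Suc n)) + x * W x (Suc n) + (x - x^2) * W x n"
proof -
  have n1: "3 \<le> Suc n" and n2: "3 \<le> Suc (Suc n)" and n3: "3 \<le> Suc (Suc (Suc n))" using n by auto
  note e1 = S_Suc_explicit[OF n, of x]
  note e2 = S_Suc_explicit[OF n1, of x]
  note e3 = S_Suc_explicit[OF n2, of x]
  note w0 = W_out[OF n, of x]
  note w1 = W_out[OF n1, of x]
  note w2 = W_out[OF n2, of x]
  note w3 = W_out[OF n3, of x]
  note z = Szero[OF n, of x]
  show ?thesis
  proof (cases "odd n")
    case True
    then show ?thesis using e1 e2 e3 w0 w1 w2 w3 z
      by (simp add: algebra_simps power2_eq_square)
  next
    case False
    then show ?thesis using e1 e2 e3 w0 w1 w2 w3 z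
      by (simp add: algebra_simps power2_eq_square)
  qed
qed

lemma W3: "W x 3 = 2 * x + 2 * x^2"
  using W_out[of 3 x] by (simp add: S3 power2_eq_square)

lemma W4: "W x 4 = x + 3 * x^2 + 3 * x^3"
proof -
  have "W x (Suc 3) = x + 3 * x^2 + 3 * x^3"
    using W_out[of "Suc 3" x] S_Suc_explicit[of 3 x]
    by (simp add: S3 power2_eq_square power3_eq_cube power4_eq_xxxx algebra_simps)
  then show ?thesis by simp
qed

lemma W5: "W x 5 = 5 * x^2 + 4 * x^3 + 2 * x^4"
proof -
  have "W x (Suc (Suc 3)) = 5 * x^2 + 4 * x^3 + 2 * x^4"
    using W_out[of "Suc (Suc 3)" x] S_Suc_explicit[of 3 x] S_Suc_explicit[of "Suc 3" x]
    by (simp add: S3 power2_eq_square power3_eq_cube power4_eq_xxxx algebra_simps)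
  then show ?thesis by (simp add: numeral_eq_Suc algebra_simps)
qed



lemma W1s: "W x (Suc 0) = 2 * x" using W1[of x] by simp

theorem mainTheorem18:
  fixes x :: real
  shows "Abs_fps (\<lambda>n. poly (D_poly n) x) =
    ((1 - fps_const x * fps_X + fps_X) * (1 + fps_const (x^2) * fps_X^2)) /
    ((1 - fps_const x * fps_X) * (1 - fps_const x * fps_X^2) - fps_const x * fps_X^3)
    + fps_const (2*x - 1) * fps_X"
proof -
  define A where "A = Abs_fps (\<lambda>n. poly (D_poly n) x)"
  define c where "c = fps_const x"
  define k where "k = fps_const (2*x - 1)"
  define Q where "Q = (1 - c * fps_X) * (1 - c * fps_X^2) - c * (fps_X :: real fps)^3"
  define P where "P = (1 - c * fps_X + fps_X) * (1 + c * c * (fps_X :: real fps)^2)"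
  have h2: "fps_const (x^2) = c * c" unfolding c_def by (simp add: power2_eq_square)
  have Q0: "Q $ 0 \<noteq> 0" unfolding Q_def c_def by simp
  define R' where "R' = 1 + (1 - c + k) * fps_X + (c*c - k*c) * fps_X^2 + ((1-c)*c*c - k*c) * fps_X^3
      + k*(c*c - c) * (fps_X :: real fps)^4"
  have PR: "P + k * fps_X * Q = R'" unfolding P_def Q_def R'_def by algebra
  have QA: "A * Q = A - c * (fps_X * A) - c * (fps_X^2 * A) + (c * c - c) * (fps_X^3 * A)"
    unfolding Q_def by algebra
  have AQ: "A * Q = R'"
  proof (rule fps_ext)
    fix n
    have lhs: "(A * Q) $ n = W x n - x * (if n = 0 then 0 else W x (n - 1))
        - x * (if n < 2 then 0 else W x (n - 2)) + (x * x - x) * (if n < 3 then 0 else W x (n - 3))"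
      unfolding QA unfolding A_def c_def by (simp add: fps_X_power_mult_nth)
    have rhs: "R' $ n = (if n = 0 then 1 else 0) + (if n = 1 then 1 - x + (2*x-1) else 0)
       + (if n = 2 then x*x - (2*x-1)*x else 0) + (if n = 3 then (1-x)*x*x - (2*x-1)*x else 0)
       + (if n = 4 then (2*x-1)*(x*x - x) else 0)"
      unfolding R'_def c_def k_def by (simp add: fps_X_power_mult_right_nth)
    consider "n = 0" | "n = 1" | "n = 2" | "n = 3" | "n = 4" | "n = 5" | m where "n = m + 6"
    proof (cases "6 \<le> n")
      case True
      then have "n = (n - 6) + 6" by simp
      then show ?thesis using that(7) by blast
    next
      case False
      then have "n = 0 \<or> n = 1 \<or> n = 2 \<or> n = 3 \<or> n = 4 \<or> n = 5" by arith
      then show ?thesis using that(1-6) by blast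
    qed
    then show "(A * Q) $ n = R' $ n"
    proof cases
      case 7
      have r: "W x (Suc (Suc (Suc (m+3)))) = x * W x (Suc (Suc (m+3))) + x * W x (Suc (m+3)) + (x - x^2) * W x (m+3)"
        by (rule Wrec) simp
      have e: "Suc (Suc (Suc (m+3))) = n" "Suc (Suc (m+3)) = n - 1" "Suc (m+3) = n - 2" "m + 3 = n - 3"
        using 7 by auto
      show ?thesis unfolding lhs rhs using r 7 unfolding e by (simp add: power2_eq_square algebra_simps)
    next
      case 1 show ?thesis unfolding lhs rhs using 1 by (simp add: W0 W1 W1s W2 W3 W4 W5 power2_eq_square power3_eq_cube power4_eq_xxxx algebra_simps)
    next
      case 2 show ?thesis unfolding lhs rhs using 2 by (simp add: W0 W1 W1s W2 W3 W4 W5 power2_eq_square power3_eq_cube power4_eq_xxxx algebra_simps)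
    next
      case 3 show ?thesis unfolding lhs rhs using 3 by (simp add: W0 W1 W1s W2 W3 W4 W5 power2_eq_square power3_eq_cube power4_eq_xxxx algebra_simps)
    next
      case 4 show ?thesis unfolding lhs rhs using 4 by (simp add: W0 W1 W1s W2 W3 W4 W5 power2_eq_square power3_eq_cube power4_eq_xxxx algebra_simps)
    next
      case 5 show ?thesis unfolding lhs rhs using 5 by (simp add: W0 W1 W1s W2 W3 W4 W5 power2_eq_square power3_eq_cube power4_eq_xxxx algebra_simps)
    next
      case 6 show ?thesis unfolding lhs rhs using 6 by (simp add: W0 W1 W1s W2 W3 W4 W5 power2_eq_square power3_eq_cube power4_eq_xxxx algebra_simps)
    qed
  qed
  have "A = A * (Q * inverse Q)" using inverse_mult_eq_1'[OF Q0] by simp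
  also have "\<dots> = (P + k * fps_X * Q) * inverse Q" using AQ PR by (simp add: mult.assoc)
  also have "\<dots> = P * inverse Q + k * fps_X * (Q * inverse Q)" by (simp add: algebra_simps)
  also have "\<dots> = P / Q + k * fps_X" using inverse_mult_eq_1'[OF Q0] fps_divide_unit[OF Q0] by simp
  finally show ?thesis unfolding A_def P_def Q_def c_def k_def h2 .
qed

end
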